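(* Let $\alpha>-1$ and $\beta>0$. For every $\Phi\in\mathcal{C}_\zeta([0,\infty))$ and every $\ell>1$, $$\lim_{\eta\to\infty}\sup_{x\in[0,\infty)}\frac{|\mathcal{R}_{\eta}^{(\alpha,\beta)}(\Phi;x)-\Phi(x)|}{(\zeta(x))^{\ell}}=0.$$
   Context: The generalized Laguerre polynomials are $\mathcal{L}_k^{(\alpha)}(t)=\sum_{i=0}^{k}\frac{(-1)^i}{i!}\binom{k+\alpha}{k-i}t^i$. Put $p_{\eta,k}(x)=e^{-\eta x/2}2^{-\alpha-1}2^{-k}\mathcal{L}_k^{(\alpha)}(-\eta x/2)$ and, for $k\ge1$, $z>0$, $\mathcal{I}_{k,\eta}^{\beta}(z)=\frac{\eta\beta e^{-\eta\beta z}(\eta\beta z)^{k\beta-1}}{\Gamma(k\beta)}$. The operator is $\mathcal{R}_{\eta}^{(\alpha,\beta)}(\Phi;x)=p_{\eta,0}(x)\Phi(0)+\sum_{k=1}^{\infty}p_{\eta,k}(x)\int_0^\infty\mathcal{I}_{k,\eta}^{\beta}(z)\Phi(z)\,dz$, $\eta>0$. Let $\zeta(x)=1+x^2$. $\mathcal{B}_\zeta([0,\infty))$ is the space of $\Phi:[0,\infty)\to\mathbb{R}$ with $|\Phi(x)|\le M_\Phi\zeta(x)$ for some constant $M_\Phi$, normed by $\|\Phi\|_\zeta=\sup_{x\ge0}|\Phi(x)|/\zeta(x)$; $\mathcal{C}_\zeta([0,\infty))$ is the subspace of continuous functions in $\mathcal{B}_\zeta([0,\infty))$. *)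

theory Defs
  imports "HOL-Analysis.Analysis"
begin

definition laguerre :: "nat \<Rightarrow> real \<Rightarrow> real \<Rightarrow> real" where
  "laguerre k \<alpha> t = (\<Sum>i=0..k. ((-1)^i / fact i) * ((real k + \<alpha>) gchoose (k - i)) * t ^ i)"

definition p_basis :: "real \<Rightarrow> real \<Rightarrow> nat \<Rightarrow> real \<Rightarrow> real" where
  "p_basis \<alpha> \<eta> k x = exp (- \<eta> * x / 2) * 2 powr (- \<alpha> - 1) * 2 powr (- real k)
      * laguerre k \<alpha> (- \<eta> * x / 2)"

definition I_kernel :: "real \<Rightarrow> nat \<Rightarrow> real \<Rightarrow> real \<Rightarrow> real" where
  "I_kernel \<beta> k \<eta> z = \<eta> * \<beta> * exp (- \<eta> * \<beta> * z) * (\<eta> * \<beta> * z) powr (real k * \<beta> - 1)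
      / Gamma (real k * \<beta>)"

definition R_op :: "real \<Rightarrow> real \<Rightarrow> real \<Rightarrow> (real \<Rightarrow> real) \<Rightarrow> real \<Rightarrow> real" where
  "R_op \<alpha> \<beta> \<eta> \<Phi> x = p_basis \<alpha> \<eta> 0 x * \<Phi> 0
     + (\<Sum>k. p_basis \<alpha> \<eta> (Suc k) x
          * (LBINT z:{0<..}. I_kernel \<beta> (Suc k) \<eta> z * \<Phi> z))"

definition zeta :: "real \<Rightarrow> real" where
  "zeta x = 1 + x^2"

definition B_zeta :: "(real \<Rightarrow> real) set" where
  "B_zeta = {\<Phi>. \<exists>M. \<forall>x\<ge>0. \<bar>\<Phi> x\<bar> \<le> M * zeta x}"

definition C_zeta :: "(real \<Rightarrow> real) set" where
  "C_zeta = {\<Phi> \<in> B_zeta. continuous_on {0..} \<Phi>}"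

end

theory Submission
  imports Defs
begin

lemma ennreal_suminf_swap: "(\<Sum>i. \<Sum>j. f i j :: ennreal) = (\<Sum>j. \<Sum>i. f i j)"
proof -
  have "(\<Sum>i. \<Sum>j. f i j) = (\<Sum>i. \<integral>\<^sup>+j. f i j \<partial>count_space UNIV)"
    by (simp add: nn_integral_count_space_nat)
  also have "\<dots> = (\<integral>\<^sup>+j. (\<Sum>i. f i j) \<partial>count_space UNIV)"
    by (rule nn_integral_suminf[symmetric]) simp
  also have "\<dots> = (\<Sum>j. \<Sum>i. f i j)"
    by (simp add: nn_integral_count_space_nat)
  finally show ?thesis .
qed

lemma diag_sums:
  fixes c :: "nat \<Rightarrow> nat \<Rightarrow> real"
  assumes nn: "\<And>i j. 0 \<le> c i j" and inner: "\<And>i. (\<lambda>j. c i j) sums S i" and outer: "S sums T"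
  shows "(\<lambda>k. \<Sum>i\<le>k. c i (k - i)) sums T"
proof -
  define d where "d i k = (if i \<le> k then c i (k - i) else 0)" for i k
  have dnn: "0 \<le> d i k" for i k using nn by (simp add: d_def)
  have Snn: "0 \<le> S i" for i using sums_le[OF _ sums_zero inner[of i]] nn by auto
  have Tnn: "0 \<le> T" using sums_le[OF _ sums_zero outer] Snn by auto
  have dsums: "(\<lambda>k. d i k) sums S i" for i
  proof -
    have "(\<lambda>k. d i (k + i)) sums S i" using inner[of i] by (simp add: d_def)
    then have "(\<lambda>k. d i k) sums (S i + (\<Sum>k<i. d i k))" by (simp add: sums_iff_shift)
    moreover have "(\<Sum>k<i. d i k) = 0" by (simp add: d_def)
    ultimately show ?thesis by simp
  qed
  have eq: "(\<Sum>i\<le>k. c i (k - i)) = (\<Sum>i. d i k)" for k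
    by (subst suminf_finite[of "{..k}"]) (auto simp: d_def)
  have "(\<Sum>k. ennreal (\<Sum>i\<le>k. c i (k - i))) = (\<Sum>k. \<Sum>i. ennreal (d i k))"
  proof (intro suminf_cong)
    fix k
    have "(\<Sum>i. ennreal (d i k)) = (\<Sum>i\<in>{..k}. ennreal (d i k))"
      by (rule suminf_finite) (auto simp: d_def)
    also have "\<dots> = ennreal (\<Sum>i\<le>k. d i k)" using dnn by simp
    also have "\<dots> = ennreal (\<Sum>i\<le>k. c i (k - i))" by (simp add: d_def)
    finally show "ennreal (\<Sum>i\<le>k. c i (k - i)) = (\<Sum>i. ennreal (d i k))" by simp
  qed
  also have "\<dots> = (\<Sum>i. \<Sum>k. ennreal (d i k))" by (rule ennreal_suminf_swap)
  also have "\<dots> = (\<Sum>i. ennreal (S i))"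
    using dsums dnn by (intro suminf_cong suminf_ennreal_eq) auto
  also have "\<dots> = ennreal T" using outer Snn by (intro suminf_ennreal_eq) auto
  finally have E: "(\<Sum>k. ennreal (\<Sum>i\<le>k. c i (k - i))) = ennreal T" .
  have nn2: "0 \<le> (\<Sum>i\<le>k. c i (k - i))" for k using nn by (simp add: sum_nonneg)
  have summ: "summable (\<lambda>k. \<Sum>i\<le>k. c i (k - i))"
    using E nn2 by (intro summable_suminf_not_top) auto
  have "(\<Sum>k. ennreal (\<Sum>i\<le>k. c i (k - i))) = ennreal (\<Sum>k. \<Sum>i\<le>k. c i (k - i))"
    using nn2 summ by (intro suminf_ennreal2) auto
  with E have "(\<Sum>k. \<Sum>i\<le>k. c i (k - i)) = T"
    using Tnn nn2 by (simp add: suminf_nonneg summ)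
  with summ show ?thesis by (simp add: sums_iff)
qed


definition NB :: "real \<Rightarrow> nat \<Rightarrow> real" where
  "NB r j = pochhammer r j / fact j / 2 ^ j"

lemma NB_nonneg: "r > 0 \<Longrightarrow> 0 \<le> NB r j"
  unfolding NB_def by (intro divide_nonneg_nonneg) (auto intro: less_imp_le pochhammer_pos)

lemma NB_alt: "NB r j = ((- r) gchoose j) * (- 1 / 2) ^ j"
proof -
  have "((- r) gchoose j) = (-1) ^ j * pochhammer r j / fact j"
    by (simp add: gbinomial_pochhammer)
  moreover have "(- 1 / 2 :: real) ^ j = (-1) ^ j / 2 ^ j" by (simp only: power_divide)
  moreover have "(-1::real) ^ j * (-1) ^ j = 1" by (simp flip: power_mult_distrib)
  ultimately have "((- r) gchoose j) * (- 1 / 2) ^ j = ((-1) ^ j * (-1) ^ j) * pochhammer r j / fact j / 2 ^ j"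
    by simp
  then show ?thesis unfolding NB_def by simp
qed

lemma NB0: assumes "r > 0" shows "(\<lambda>j. NB r j) sums (2 powr r)"
proof -
  have "(\<lambda>n. ((- r) gchoose n) * (- 1 / 2) ^ n) sums (1 + (- 1 / 2)) powr (- r)"
    by (rule gen_binomial_real) simp
  moreover have "(1 + (- 1 / 2 :: real)) powr (- r) = 2 powr r"
    by (simp add: powr_minus_divide powr_divide)
  ultimately show ?thesis by (simp add: NB_alt)
qed

lemma NB_Suc: "real (Suc n) * NB r (Suc n) = r / 2 * NB (r + 1) n"
proof -
  have f: "fact (Suc n) = real (Suc n) * (fact n :: real)" by simp
  have "real (Suc n) * NB r (Suc n) = real (Suc n) * (r * pochhammer (r + 1) n) / (real (Suc n) * fact n) / (2 * 2 ^ n)"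
    unfolding NB_def f by (simp add: pochhammer_rec)
  also have "\<dots> = r / 2 * NB (r + 1) n"
    unfolding NB_def by (simp add: field_simps del: of_nat_Suc)
  finally show ?thesis .
qed

lemma NB1: assumes "r > 0" shows "(\<lambda>j. real j * NB r j) sums (r * 2 powr r)"
proof -
  have "(\<lambda>n. r / 2 * NB (r + 1) n) sums (r / 2 * 2 powr (r + 1))"
    using NB0[of "r+1"] assms by (intro sums_mult) auto
  moreover have "(\<lambda>n. real (Suc n) * NB r (Suc n)) = (\<lambda>n. r / 2 * NB (r + 1) n)"
    by (simp only: NB_Suc)
  ultimately have "(\<lambda>n. real (Suc n) * NB r (Suc n)) sums (r * 2 powr r)"
    by (simp add: powr_add)
  then show ?thesis by (subst (asm) sums_Suc_iff) simp
qed

lemma NB2: assumes "r > 0" shows "(\<lambda>j. real j ^ 2 * NB r j) sums ((r^2 + 2 * r) * 2 powr r)"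
proof -
  have "(\<lambda>n. r / 2 * (real n * NB (r + 1) n)) sums (r / 2 * ((r + 1) * 2 powr (r + 1)))"
    using NB1[of "r+1"] assms by (intro sums_mult) auto
  moreover have "(\<lambda>n. real n * (real (Suc n) * NB r (Suc n))) = (\<lambda>n. r / 2 * (real n * NB (r + 1) n))"
    by (simp only: NB_Suc mult_ac)
  ultimately have "(\<lambda>n. real n * (real (Suc n) * NB r (Suc n))) sums (r * (r + 1) * 2 powr r)"
    by (simp add: powr_add mult_ac)
  then have "(\<lambda>n. (real (Suc n) * (real (Suc n) - 1)) * NB r (Suc n)) sums (r * (r + 1) * 2 powr r)"
    by (simp add: mult_ac)
  then have A: "(\<lambda>j. (real j * (real j - 1)) * NB r j) sums (r * (r + 1) * 2 powr r)"
    by (subst (asm) sums_Suc_iff) simp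
  have "(\<lambda>j. (real j * (real j - 1)) * NB r j + real j * NB r j) sums (r * (r + 1) * 2 powr r + r * 2 powr r)"
    by (intro sums_add A NB1 assms)
  then show ?thesis by (simp add: power2_eq_square algebra_simps)
qed

lemma P0: "(\<lambda>i. s ^ i / fact i) sums (exp s :: real)"
  using exp_converges[of s] by (simp add: divide_inverse mult.commute)

lemma fact_shift: "real (Suc n) * (s ^ Suc n / fact (Suc n)) = s * (s ^ n / fact n :: real)"
proof -
  have f: "fact (Suc n) = real (Suc n) * (fact n :: real)" by simp
  show ?thesis unfolding f by (simp add: field_simps del: of_nat_Suc)
qed

lemma P1: "(\<lambda>i. real i * (s ^ i / fact i)) sums (s * exp s :: real)"
proof -
  have "(\<lambda>n. s * (s ^ n / fact n)) sums (s * exp s)" by (intro sums_mult P0)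
  then have "(\<lambda>n. real (Suc n) * (s ^ Suc n / fact (Suc n))) sums (s * exp s)"
    by (simp only: fact_shift)
  then show ?thesis by (subst (asm) sums_Suc_iff) simp
qed

lemma P2: "(\<lambda>i. real i ^ 2 * (s ^ i / fact i)) sums ((s^2 + s) * exp s :: real)"
proof -
  have "(\<lambda>n. s * (real n * (s ^ n / fact n))) sums (s * (s * exp s))" by (intro sums_mult P1)
  moreover have "(\<lambda>n. real (Suc n) * (real (Suc n) - 1) * (s ^ Suc n / fact (Suc n))) = (\<lambda>n. s * (real n * (s ^ n / fact n)))"
  proof
    fix n
    have "real (Suc n) * (real (Suc n) - 1) * (s ^ Suc n / fact (Suc n)) = real n * (real (Suc n) * (s ^ Suc n / fact (Suc n)))"
      by (simp add: mult_ac)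
    also have "\<dots> = s * (real n * (s ^ n / fact n))" by (simp only: fact_shift mult_ac)
    finally show "real (Suc n) * (real (Suc n) - 1) * (s ^ Suc n / fact (Suc n)) = s * (real n * (s ^ n / fact n))" .
  qed
  ultimately have "(\<lambda>n. real (Suc n) * (real (Suc n) - 1) * (s ^ Suc n / fact (Suc n))) sums (s * (s * exp s))"
    by simp
  then have A: "(\<lambda>n. real n * (real n - 1) * (s ^ n / fact n)) sums (s * (s * exp s))"
    by (subst (asm) sums_Suc_iff) simp
  have "(\<lambda>n. real n * (real n - 1) * (s ^ n / fact n) + real n * (s ^ n / fact n)) sums (s * (s * exp s) + s * exp s)"
    by (intro sums_add A P1)
  then show ?thesis by (simp add: power2_eq_square algebra_simps)
qed


definition cc :: "real \<Rightarrow> real \<Rightarrow> nat \<Rightarrow> nat \<Rightarrow> real" where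
  "cc a s i j = exp (- s) * (s ^ i / fact i) * 2 powr (- (real i + a)) * NB (real i + a) j"

lemma cc_nonneg: "a > 0 \<Longrightarrow> s \<ge> 0 \<Longrightarrow> 0 \<le> cc a s i j"
  unfolding cc_def by (intro mult_nonneg_nonneg NB_nonneg) auto

lemma p_decomp:
  assumes "\<alpha> > -1"
  shows "p_basis \<alpha> \<eta> k x = (\<Sum>i\<le>k. cc (\<alpha> + 1) (\<eta> * x / 2) i (k - i))"
proof -
  let ?s = "\<eta> * x / 2"
  have "p_basis \<alpha> \<eta> k x = (\<Sum>i\<le>k. exp (- ?s) * 2 powr (- \<alpha> - 1) * 2 powr (- real k)
      * (((-1)^i / fact i) * ((real k + \<alpha>) gchoose (k - i)) * (- \<eta> * x / 2) ^ i))"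
    unfolding p_basis_def laguerre_def by (simp add: sum_distrib_left atLeast0AtMost)
  also have "\<dots> = (\<Sum>i\<le>k. cc (\<alpha> + 1) ?s i (k - i))"
  proof (intro sum.cong refl)
    fix i assume "i \<in> {..k}"
    then have ik: "i \<le> k" by simp
    have g: "((real k + \<alpha>) gchoose (k - i)) = pochhammer (real i + (\<alpha> + 1)) (k - i) / fact (k - i)"
      by (subst gbinomial_pochhammer') (simp add: of_nat_diff ik algebra_simps)
    have e1: "(- \<eta> * x / 2) = (-1) * ?s" by simp
    have e2: "(-1::real) ^ i * (-1) ^ i = 1" by (simp flip: power_mult_distrib)
    have pw: "((-1)^i / fact i) * (- \<eta> * x / 2) ^ i = ?s ^ i / fact i"
      unfolding e1 power_mult_distrib using e2 by (simp add: divide_simps)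
    have p2: "2 powr (- \<alpha> - 1) * 2 powr (- real k) = 2 powr (- (real i + (\<alpha> + 1))) / 2 ^ (k - i)"
    proof -
      have "2 powr (- \<alpha> - 1) * 2 powr (- real k) = 2 powr (- (real i + (\<alpha> + 1)) - real (k - i))"
        by (simp add: powr_add[symmetric] of_nat_diff ik) (rule arg_cong[where f="\<lambda>t. 2 powr t"], simp)
      also have "\<dots> = 2 powr (- (real i + (\<alpha> + 1))) / 2 ^ (k - i)"
        by (simp add: powr_diff powr_realpow)
      finally show ?thesis .
    qed
    show "exp (- ?s) * 2 powr (- \<alpha> - 1) * 2 powr (- real k)
      * (((-1)^i / fact i) * ((real k + \<alpha>) gchoose (k - i)) * (- \<eta> * x / 2) ^ i) = cc (\<alpha> + 1) ?s i (k - i)"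
    proof -
      have "exp (- ?s) * 2 powr (- \<alpha> - 1) * 2 powr (- real k)
      * (((-1)^i / fact i) * ((real k + \<alpha>) gchoose (k - i)) * (- \<eta> * x / 2) ^ i)
        = exp (- ?s) * (2 powr (- \<alpha> - 1) * 2 powr (- real k)) * ((((-1)^i / fact i) * (- \<eta> * x / 2) ^ i) * ((real k + \<alpha>) gchoose (k - i)))"
        by (simp add: ac_simps)
      also have "\<dots> = exp (- ?s) * (2 powr (- (real i + (\<alpha> + 1))) / 2 ^ (k - i)) * ((?s ^ i / fact i) * (pochhammer (real i + (\<alpha> + 1)) (k - i) / fact (k - i)))"
        by (simp only: pw p2 g)
      also have "\<dots> = cc (\<alpha> + 1) ?s i (k - i)"
        unfolding cc_def NB_def by (simp add: ac_simps)
      finally show ?thesis .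
    qed
  qed
  finally show ?thesis .
qed


lemma cc_inner:
  assumes "(\<lambda>j. NB (real i + a) j * f j) sums (W * 2 powr (real i + a))"
  shows "(\<lambda>j. cc a s i j * f j) sums (exp (- s) * (s ^ i / fact i) * W)"
proof -
  have "(\<lambda>j. (exp (- s) * (s ^ i / fact i) * 2 powr (- (real i + a))) * (NB (real i + a) j * f j)) sums
     ((exp (- s) * (s ^ i / fact i) * 2 powr (- (real i + a))) * (W * 2 powr (real i + a)))"
    by (intro sums_mult assms)
  moreover have "2 powr (- (real i + a)) * (W * 2 powr (real i + a)) = W"
  proof -
    have "2 powr (- (real i + a)) * 2 powr (real i + a) = (1::real)"
      by (subst powr_add[symmetric]) simp
    then show ?thesis by (metis mult.assoc mult.commute mult_1_right)
  qed
  ultimately show ?thesis unfolding cc_def by (simp only: mult.assoc)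
qed

lemma pw_cancel: "2 powr (- r) * (c * 2 powr r) = (c::real)"
  by (simp add: powr_minus field_simps)

lemma diag_rewrite: fixes k :: nat shows "(\<Sum>i\<le>k. c i (k - i)) * (g k :: real) = (\<Sum>i\<le>k. c i (k - i) * g (i + (k - i)))"
  unfolding sum_distrib_right
proof (intro sum.cong refl)
  fix i assume "i \<in> {..k}"
  then have "i + (k - i) = k" by simp
  then show "c i (k - i) * g k = c i (k - i) * g (i + (k - i))" by simp
qed

lemma sums_eqI: "f sums a \<Longrightarrow> (\<And>n. f n = g n) \<Longrightarrow> a = b \<Longrightarrow> g sums b"
  by (metis ext)

lemma Q0:
  assumes "a > 0" "s \<ge> 0"
  shows "(\<lambda>k. \<Sum>i\<le>k. cc a s i (k - i)) sums 1"
proof (rule diag_sums)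
  show "0 \<le> cc a s i j" for i j using assms by (rule cc_nonneg)
  show "(\<lambda>j. cc a s i j) sums (exp (- s) * (s ^ i / fact i))" for i
    using cc_inner[of i a "\<lambda>j. 1" 1 s] NB0[of "real i + a"] assms
    by simp
  show "(\<lambda>i. exp (- s) * (s ^ i / fact i)) sums 1"
    using sums_mult[OF P0[of s], of "exp (- s)"] by (simp add: exp_minus field_simps)
qed

lemma Q1:
  assumes "a > 0" "s \<ge> 0"
  shows "(\<lambda>k. (\<Sum>i\<le>k. cc a s i (k - i)) * real k) sums (a + 2 * s)"
  unfolding diag_rewrite[where g = real]
proof (rule diag_sums)
  show "0 \<le> cc a s i j * real (i + j)" for i j using cc_nonneg[OF assms] by simp
  show "(\<lambda>j. cc a s i j * real (i + j)) sums (exp (- s) * (s ^ i / fact i) * (2 * real i + a))" for i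
  proof -
    let ?r = "real i + a"
    have "(\<lambda>j. real i * NB ?r j + real j * NB ?r j) sums (real i * 2 powr ?r + ?r * 2 powr ?r)"
      using assms by (intro sums_add sums_mult NB0 NB1) auto
    then have "(\<lambda>j. NB ?r j * real (i + j)) sums ((2 * real i + a) * 2 powr ?r)"
      by (simp add: algebra_simps)
    from cc_inner[OF this, of s] show ?thesis by simp
  qed
  show "(\<lambda>i. exp (- s) * (s ^ i / fact i) * (2 * real i + a)) sums (a + 2 * s)"
  proof -
    have "(\<lambda>i. exp (- s) * (2 * (real i * (s ^ i / fact i)) + a * (s ^ i / fact i))) sums (exp (- s) * (2 * (s * exp s) + a * exp s))"
      by (intro sums_mult sums_add P0 P1)
    then show ?thesis
      by (rule sums_eqI) (simp_all add: exp_minus field_simps)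
  qed
qed

lemma Q2:
  assumes "a > 0" "s \<ge> 0"
  shows "(\<lambda>k. (\<Sum>i\<le>k. cc a s i (k - i)) * real k ^ 2) sums ((a + 2 * s)^2 + 6 * s + 2 * a)"
  unfolding diag_rewrite[where g = "\<lambda>k. real k ^ 2"]
proof (rule diag_sums)
  show "0 \<le> cc a s i j * real (i + j) ^ 2" for i j using cc_nonneg[OF assms] by simp
  show "(\<lambda>j. cc a s i j * real (i + j) ^ 2) sums (exp (- s) * (s ^ i / fact i) * (4 * real i ^ 2 + (4 * a + 2) * real i + a ^ 2 + 2 * a))" for i
  proof -
    let ?r = "real i + a"
    have "(\<lambda>j. real i ^ 2 * NB ?r j + 2 * real i * (real j * NB ?r j) + real j ^ 2 * NB ?r j) sums
        (real i ^ 2 * 2 powr ?r + 2 * real i * (?r * 2 powr ?r) + (?r ^ 2 + 2 * ?r) * 2 powr ?r)"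
      using assms by (intro sums_add sums_mult NB0 NB1 NB2) auto
    then have "(\<lambda>j. NB ?r j * real (i + j) ^ 2) sums ((4 * real i ^ 2 + (4 * a + 2) * real i + a ^ 2 + 2 * a) * 2 powr ?r)"
      by (simp add: algebra_simps power2_eq_square)
    from cc_inner[OF this, of s] show ?thesis by simp
  qed
  show "(\<lambda>i. exp (- s) * (s ^ i / fact i) * (4 * real i ^ 2 + (4 * a + 2) * real i + a ^ 2 + 2 * a)) sums ((a + 2 * s)^2 + 6 * s + 2 * a)"
  proof -
    have "(\<lambda>i. exp (- s) * (4 * (real i ^ 2 * (s ^ i / fact i)) + (4 * a + 2) * (real i * (s ^ i / fact i)) + (a ^ 2 + 2 * a) * (s ^ i / fact i))) sums
       (exp (- s) * (4 * ((s^2 + s) * exp s) + (4 * a + 2) * (s * exp s) + (a ^ 2 + 2 * a) * exp s))"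
      by (intro sums_mult sums_add P0 P1 P2)
    then show ?thesis
      by (rule sums_eqI) (simp_all add: exp_minus field_simps power2_eq_square)
  qed
qed


lemma kernel_nn:
  fixes m :: nat
  assumes L: "L > 0" and r: "r > 0"
  shows "(\<integral>\<^sup>+z. ennreal (indicator {0<..} z * (L * exp (- L * z) * (L * z) powr (r - 1) / Gamma r * z ^ m)) \<partial>lborel)
         = ennreal (Gamma (r + real m) / (Gamma r * L ^ m))"
proof -
  define f where "f z = ennreal (indicator {0<..} z * (L * exp (- L * z) * (L * z) powr (r - 1) / Gamma r * z ^ m))" for z
  define g where "g u = ennreal (indicator {0..} u * u powr (r + real m - 1) / exp u)" for u
  have fm: "f \<in> borel_measurable borel" unfolding f_def by measurable
  have gm: "g \<in> borel_measurable borel" unfolding g_def by measurable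
  have Gpos: "Gamma r > 0" using r by simp
  have eq: "f (u / L) = ennreal (1 / (Gamma r * L ^ m)) * ennreal L * g u" for u
  proof (cases "u > 0")
    case True
    have "L * (u / L) = u" using L by simp
    have "(L * (u / L)) powr (r - 1) * (u / L) ^ m = u powr (r - 1) * u ^ m / L ^ m"
      using L by (simp add: power_divide)
    also have "u powr (r - 1) * u ^ m = u powr (r + real m - 1)"
      using True by (simp add: powr_realpow[symmetric] powr_add[symmetric] algebra_simps)
    finally have k: "(L * (u / L)) powr (r - 1) * (u / L) ^ m = u powr (r + real m - 1) / L ^ m" .
    have e: "exp (- L * (u / L)) = 1 / exp u" using L by (simp add: exp_minus field_simps)
    have "indicator {0<..} (u / L) * (L * exp (- L * (u / L)) * (L * (u / L)) powr (r - 1) / Gamma r * (u / L) ^ m)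
        = 1 / (Gamma r * L ^ m) * L * (u powr (r + real m - 1) / exp u)"
      using True L k by (simp add: field_simps exp_minus)
    then show ?thesis using True L Gpos unfolding f_def g_def
      by (simp add: ennreal_mult[symmetric] mult.assoc)
  next
    case False
    then have "u \<le> 0" by simp
    moreover have "u / L \<le> 0" using False L by (simp add: divide_nonpos_pos)
    ultimately show ?thesis unfolding f_def g_def
      by (cases "u = 0") auto
  qed
  have "(\<integral>\<^sup>+z. f z \<partial>lborel) = ennreal \<bar>1 / L\<bar> * (\<integral>\<^sup>+u. f (0 + 1 / L * u) \<partial>lborel)"
    using nn_integral_real_affine[OF fm, of "1 / L" 0] L by simp
  also have "\<dots> = ennreal (1 / L) * (\<integral>\<^sup>+u. (ennreal (1 / (Gamma r * L ^ m)) * ennreal L) * g u \<partial>lborel)"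
    using L by (simp add: eq)
  also have "\<dots> = ennreal (1 / L) * ((ennreal (1 / (Gamma r * L ^ m)) * ennreal L) * (\<integral>\<^sup>+u. g u \<partial>lborel))"
    using gm by (simp add: nn_integral_cmult)
  also have "(\<integral>\<^sup>+u. g u \<partial>lborel) = ennreal (Gamma (r + real m))"
    unfolding g_def using r by (simp add: Gamma_conv_nn_integral_real)
  also have "ennreal (1 / L) * ((ennreal (1 / (Gamma r * L ^ m)) * ennreal L) * ennreal (Gamma (r + real m)))
      = ennreal (1 / L * (1 / (Gamma r * L ^ m) * L * Gamma (r + real m)))"
    using L Gpos r by (simp add: ennreal_mult[symmetric])
  also have "1 / L * (1 / (Gamma r * L ^ m) * L * Gamma (r + real m)) = Gamma (r + real m) / (Gamma r * L ^ m)"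
    using L by (simp add: field_simps)
  finally show ?thesis unfolding f_def .
qed


lemma I_kernel_alt: "I_kernel \<beta> k \<eta> z = (\<eta>*\<beta>) * exp (- (\<eta>*\<beta>) * z) * ((\<eta>*\<beta>) * z) powr (real k * \<beta> - 1) / Gamma (real k * \<beta>)"
  unfolding I_kernel_def by (simp add: mult.assoc)

lemma I_kernel_nonneg: "\<eta> > 0 \<Longrightarrow> \<beta> > 0 \<Longrightarrow> k > 0 \<Longrightarrow> z > 0 \<Longrightarrow> 0 \<le> I_kernel \<beta> k \<eta> z"
  unfolding I_kernel_def by (intro divide_nonneg_nonneg mult_nonneg_nonneg) auto

lemma I_kernel_meas [measurable]: "(\<lambda>z. I_kernel \<beta> k \<eta> z) \<in> borel_measurable borel"
  unfolding I_kernel_def by measurable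

lemma kernel_moment:
  fixes m :: nat
  assumes "\<eta> > 0" "\<beta> > 0" "k > 0"
  shows "set_integrable lborel {0<..} (\<lambda>z. I_kernel \<beta> k \<eta> z * z ^ m)"
    and "(LBINT z:{0<..}. I_kernel \<beta> k \<eta> z * z ^ m) = Gamma (real k * \<beta> + real m) / (Gamma (real k * \<beta>) * (\<eta> * \<beta>) ^ m)"
proof -
  let ?h = "\<lambda>z. indicator {0<..} z * (I_kernel \<beta> k \<eta> z * z ^ m)"
  have L: "\<eta> * \<beta> > 0" and r: "real k * \<beta> > 0" using assms by auto
  have nn: "(\<integral>\<^sup>+z. ennreal (?h z) \<partial>lborel) = ennreal (Gamma (real k * \<beta> + real m) / (Gamma (real k * \<beta>) * (\<eta> * \<beta>) ^ m))"
    using kernel_nn[OF L r, of m] by (simp add: I_kernel_alt mult.assoc)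
  have hm: "?h \<in> borel_measurable lborel" by measurable
  have hnn: "AE z in lborel. 0 \<le> ?h z"
    using assms by (auto intro!: mult_nonneg_nonneg I_kernel_nonneg simp: indicator_def)
  have int: "integrable lborel ?h"
    by (rule integrableI_nn_integral_finite[OF hm hnn nn])
  then show "set_integrable lborel {0<..} (\<lambda>z. I_kernel \<beta> k \<eta> z * z ^ m)"
    by (simp add: set_integrable_def)
  have "integral\<^sup>L lborel ?h = enn2real (\<integral>\<^sup>+z. ennreal (?h z) \<partial>lborel)"
    by (rule integral_eq_nn_integral[OF hm hnn])
  also have "\<dots> = Gamma (real k * \<beta> + real m) / (Gamma (real k * \<beta>) * (\<eta> * \<beta>) ^ m)"
    using nn L r by (simp add: enn2real_ennreal)
  finally show "(LBINT z:{0<..}. I_kernel \<beta> k \<eta> z * z ^ m) = Gamma (real k * \<beta> + real m) / (Gamma (real k * \<beta>) * (\<eta> * \<beta>) ^ m)"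
    by (simp add: set_lebesgue_integral_def)
qed

lemma Gamma_p1: "r > 0 \<Longrightarrow> Gamma (r + 1) = r * Gamma (r::real)"
  by (rule Gamma_plus1) (auto simp: nonpos_Ints_def)

lemma kernel_m0: assumes "\<eta> > 0" "\<beta> > 0" "k > 0"
  shows "(LBINT z:{0<..}. I_kernel \<beta> k \<eta> z) = 1"
proof -
  have "Gamma (real k * \<beta>) > 0" using assms by simp
  then show ?thesis using kernel_moment(2)[OF assms, of 0] by simp
qed

lemma kernel_m1: assumes "\<eta> > 0" "\<beta> > 0" "k > 0"
  shows "(LBINT z:{0<..}. I_kernel \<beta> k \<eta> z * z) = real k / \<eta>"
proof -
  have G0: "Gamma (real k * \<beta>) > 0" using assms by simp
  then have G: "Gamma (real k * \<beta>) \<noteq> 0" by simp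
  have "(LBINT z:{0<..}. I_kernel \<beta> k \<eta> z * z) = Gamma (real k * \<beta> + 1) / (Gamma (real k * \<beta>) * (\<eta> * \<beta>))"
    using kernel_moment(2)[OF assms, of 1] by simp
  also have "Gamma (real k * \<beta> + 1) = real k * \<beta> * Gamma (real k * \<beta>)"
    using assms by (intro Gamma_p1) simp
  also have "real k * \<beta> * Gamma (real k * \<beta>) / (Gamma (real k * \<beta>) * (\<eta> * \<beta>)) = real k / \<eta>"
    using assms G by (simp add: field_simps)
  finally show ?thesis .
qed

lemma kernel_m2: assumes "\<eta> > 0" "\<beta> > 0" "k > 0"
  shows "(LBINT z:{0<..}. I_kernel \<beta> k \<eta> z * z ^ 2) = (real k ^ 2 + real k / \<beta>) / \<eta> ^ 2"
proof -
  have G0: "Gamma (real k * \<beta>) > 0" using assms by simp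
  then have G: "Gamma (real k * \<beta>) \<noteq> 0" by simp
  have "(LBINT z:{0<..}. I_kernel \<beta> k \<eta> z * z ^ 2) = Gamma (real k * \<beta> + 1 + 1) / (Gamma (real k * \<beta>) * (\<eta> * \<beta>) ^ 2)"
    using kernel_moment(2)[OF assms, of 2] by (simp add: add.assoc)
  also have "Gamma (real k * \<beta> + 1 + 1) = (real k * \<beta> + 1) * (real k * \<beta>) * Gamma (real k * \<beta>)"
  proof -
    have "Gamma (real k * \<beta> + 1 + 1) = (real k * \<beta> + 1) * Gamma (real k * \<beta> + 1)"
      using assms by (intro Gamma_p1) (simp add: add_pos_pos)
    also have "Gamma (real k * \<beta> + 1) = real k * \<beta> * Gamma (real k * \<beta>)"
      using assms by (intro Gamma_p1) simp
    finally show ?thesis by (simp add: mult.assoc)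
  qed
  also have "(real k * \<beta> + 1) * (real k * \<beta>) * Gamma (real k * \<beta>) / (Gamma (real k * \<beta>) * (\<eta> * \<beta>) ^ 2) = (real k ^ 2 + real k / \<beta>) / \<eta> ^ 2"
    using assms G by (simp add: field_simps power2_eq_square)
  finally show ?thesis .
qed


lemma abstract_bound:
  fixes K \<Phi> :: "real \<Rightarrow> real"
  assumes Knn: "\<And>z. 0 \<le> K z" and Kz: "\<And>z. z \<le> 0 \<Longrightarrow> K z = 0"
    and i0: "integrable lborel K" and i1: "integrable lborel (\<lambda>z. K z * z)"
    and i2: "integrable lborel (\<lambda>z. K z * z ^ 2)"
    and v0: "integral\<^sup>L lborel K = 1" and v1: "integral\<^sup>L lborel (\<lambda>z. K z * z) = m1"
    and v2: "integral\<^sup>L lborel (\<lambda>z. K z * z ^ 2) = m2"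
    and meas: "(\<lambda>z. K z * \<Phi> z) \<in> borel_measurable lborel"
    and growth: "\<And>z. z \<ge> 0 \<Longrightarrow> \<bar>\<Phi> z\<bar> \<le> M * (1 + z ^ 2)"
    and hyp: "\<And>t. t \<ge> 0 \<Longrightarrow> \<bar>\<Phi> t - \<Phi> x\<bar> \<le> E + D * (t - x) ^ 2"
  shows "integrable lborel (\<lambda>z. K z * \<Phi> z)"
    and "\<bar>integral\<^sup>L lborel (\<lambda>z. K z * \<Phi> z) - \<Phi> x\<bar> \<le> E + D * (m2 - 2 * x * m1 + x ^ 2)"
proof -
  have ib: "integrable lborel (\<lambda>z. M * K z + M * (K z * z ^ 2))"
    using i0 i2 by (intro Bochner_Integration.integrable_add Bochner_Integration.integrable_mult_right)
  show int: "integrable lborel (\<lambda>z. K z * \<Phi> z)"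
  proof (rule Bochner_Integration.integrable_bound[OF ib meas], rule AE_I2)
    fix z
    show "norm (K z * \<Phi> z) \<le> norm (M * K z + M * (K z * z ^ 2))"
    proof (cases "z \<le> 0")
      case True then show ?thesis using Kz[OF True] by simp
    next
      case False
      then have "\<bar>\<Phi> z\<bar> \<le> M * (1 + z ^ 2)" using growth by simp
      then have "K z * \<bar>\<Phi> z\<bar> \<le> K z * (M * (1 + z ^ 2))" using Knn by (intro mult_left_mono) auto
      moreover have "K z * (M * (1 + z ^ 2)) = M * K z + M * (K z * z ^ 2)" by (simp add: algebra_simps)
      ultimately show ?thesis using Knn[of z] by (simp add: abs_mult)
    qed
  qed
  let ?g = "\<lambda>z. E * K z + D * (K z * z ^ 2) - (2 * D * x) * (K z * z) + (D * x ^ 2) * K z"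
  have ig: "integrable lborel ?g"
    using i0 i1 i2 by (intro Bochner_Integration.integrable_add Bochner_Integration.integrable_diff Bochner_Integration.integrable_mult_right)
  have id: "integrable lborel (\<lambda>z. K z * \<Phi> z - \<Phi> x * K z)"
    using int i0 by (intro Bochner_Integration.integrable_diff Bochner_Integration.integrable_mult_right)
  have "integral\<^sup>L lborel (\<lambda>z. K z * \<Phi> z) - \<Phi> x = integral\<^sup>L lborel (\<lambda>z. K z * \<Phi> z - \<Phi> x * K z)"
    using int i0 v0 by (simp add: Bochner_Integration.integral_diff)
  also have "\<bar>\<dots>\<bar> \<le> integral\<^sup>L lborel (\<lambda>z. \<bar>K z * \<Phi> z - \<Phi> x * K z\<bar>)"
    by (rule integral_abs_bound)
  also have "\<dots> \<le> integral\<^sup>L lborel ?g"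
  proof (rule integral_mono)
    show "integrable lborel (\<lambda>z. \<bar>K z * \<Phi> z - \<Phi> x * K z\<bar>)" using id by (rule Bochner_Integration.integrable_abs)
    show "integrable lborel ?g" by (rule ig)
    fix z
    show "\<bar>K z * \<Phi> z - \<Phi> x * K z\<bar> \<le> ?g z"
    proof (cases "z \<le> 0")
      case True then show ?thesis using Kz[OF True] by simp
    next
      case False
      then have "\<bar>\<Phi> z - \<Phi> x\<bar> \<le> E + D * (z - x) ^ 2" using hyp by simp
      then have "K z * \<bar>\<Phi> z - \<Phi> x\<bar> \<le> K z * (E + D * (z - x) ^ 2)" using Knn by (intro mult_left_mono) auto
      moreover have "K z * (E + D * (z - x) ^ 2) = ?g z" by (simp add: algebra_simps power2_eq_square)
      moreover have "\<bar>K z * \<Phi> z - \<Phi> x * K z\<bar> = K z * \<bar>\<Phi> z - \<Phi> x\<bar>"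
      proof -
        have "K z * \<Phi> z - \<Phi> x * K z = K z * (\<Phi> z - \<Phi> x)" by (simp add: algebra_simps)
        then show ?thesis using Knn[of z] by (simp add: abs_mult)
      qed
      ultimately show ?thesis by simp
    qed
  qed
  also have "integral\<^sup>L lborel ?g = E * integral\<^sup>L lborel K + D * integral\<^sup>L lborel (\<lambda>z. K z * z ^ 2)
       - (2 * D * x) * integral\<^sup>L lborel (\<lambda>z. K z * z) + (D * x ^ 2) * integral\<^sup>L lborel K"
    using i0 i1 i2 by (simp add: Bochner_Integration.integral_add Bochner_Integration.integral_diff)
  also have "\<dots> = E + D * (m2 - 2 * x * m1 + x ^ 2)"
    unfolding v0 v1 v2 by (simp add: algebra_simps)
  finally show "\<bar>integral\<^sup>L lborel (\<lambda>z. K z * \<Phi> z) - \<Phi> x\<bar> \<le> E + D * (m2 - 2 * x * m1 + x ^ 2)" .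
qed


lemma J_bound:
  fixes \<Phi> :: "real \<Rightarrow> real"
  assumes pos: "\<eta> > 0" "\<beta> > 0" "k > 0"
    and cont: "continuous_on {0..} \<Phi>"
    and growth: "\<And>z. z \<ge> 0 \<Longrightarrow> \<bar>\<Phi> z\<bar> \<le> M * (1 + z ^ 2)"
    and hyp: "\<And>t. t \<ge> 0 \<Longrightarrow> \<bar>\<Phi> t - \<Phi> x\<bar> \<le> E + D * (t - x) ^ 2"
  shows "\<bar>(LBINT z:{0<..}. I_kernel \<beta> k \<eta> z * \<Phi> z) - \<Phi> x\<bar>
           \<le> E + D * ((real k ^ 2 + real k / \<beta>) / \<eta> ^ 2 - 2 * x * (real k / \<eta>) + x ^ 2)"
proof -
  define K where "K z = indicator {0<..} z * I_kernel \<beta> k \<eta> z" for z :: real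
  have eqm: "(\<lambda>z. indicator {0<..} z * (I_kernel \<beta> k \<eta> z * z ^ m)) = (\<lambda>z. K z * z ^ m)" for m :: nat
    by (simp add: K_def mult.assoc)
  have im: "integrable lborel (\<lambda>z. K z * z ^ m)" for m :: nat
    using kernel_moment(1)[OF pos, of m] by (simp add: set_integrable_def eqm)
  have vm: "integral\<^sup>L lborel (\<lambda>z. K z * z ^ m) = (LBINT z:{0<..}. I_kernel \<beta> k \<eta> z * z ^ m)" for m :: nat
    by (simp add: set_lebesgue_integral_def eqm)
  have Knn: "0 \<le> K z" for z
    using I_kernel_nonneg[OF pos, of z] by (simp add: K_def indicator_def)
  have Kz: "z \<le> 0 \<Longrightarrow> K z = 0" for z by (simp add: K_def)
  have i0: "integrable lborel K" using im[of 0] by simp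
  have i1: "integrable lborel (\<lambda>z. K z * z)" using im[of 1] by simp
  have i2: "integrable lborel (\<lambda>z. K z * z ^ 2)" using im[of 2] by simp
  have v0: "integral\<^sup>L lborel K = 1" using vm[of 0] kernel_m0[OF pos] by simp
  have v1: "integral\<^sup>L lborel (\<lambda>z. K z * z) = real k / \<eta>" using vm[of 1] kernel_m1[OF pos] by simp
  have v2: "integral\<^sup>L lborel (\<lambda>z. K z * z ^ 2) = (real k ^ 2 + real k / \<beta>) / \<eta> ^ 2"
    using vm[of 2] kernel_m2[OF pos] by simp
  have c2: "continuous_on {0<..} \<Phi>" using cont by (rule continuous_on_subset) auto
  have mi: "(\<lambda>z. indicator {0<..} z *\<^sub>R \<Phi> z) \<in> borel_measurable borel"
    by (rule borel_measurable_continuous_on_indicator[OF _ c2]) simp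
  have "(\<lambda>z. I_kernel \<beta> k \<eta> z * (indicator {0<..} z *\<^sub>R \<Phi> z)) \<in> borel_measurable borel"
    using mi by measurable
  then have meas: "(\<lambda>z. K z * \<Phi> z) \<in> borel_measurable lborel"
    by (simp add: K_def mult_ac)
  have "\<bar>integral\<^sup>L lborel (\<lambda>z. K z * \<Phi> z) - \<Phi> x\<bar> \<le> E + D * ((real k ^ 2 + real k / \<beta>) / \<eta> ^ 2 - 2 * x * (real k / \<eta>) + x ^ 2)"
    by (rule abstract_bound(2)[OF Knn Kz i0 i1 i2 v0 v1 v2 meas growth hyp])
  moreover have "(LBINT z:{0<..}. I_kernel \<beta> k \<eta> z * \<Phi> z) = integral\<^sup>L lborel (\<lambda>z. K z * \<Phi> z)"
    by (simp add: set_lebesgue_integral_def K_def mult.assoc)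
  ultimately show ?thesis by simp
qed


lemma abs_suminf_le:
  fixes f g :: "nat \<Rightarrow> real"
  assumes "\<And>n. \<bar>f n\<bar> \<le> g n" "summable f" "summable g"
  shows "\<bar>suminf f\<bar> \<le> suminf g"
proof -
  have "suminf f \<le> suminf g" using assms by (intro suminf_le) (auto simp: abs_le_iff)
  moreover have l: "- g n \<le> f n" for n using assms(1)[of n] by linarith
  have "suminf (\<lambda>n. - g n) \<le> suminf f" using assms
    by (intro suminf_le summable_minus l)
  ultimately show ?thesis using assms(3) by (simp add: suminf_minus)
qed

lemma R_bound:
  fixes \<Phi> :: "real \<Rightarrow> real"
  assumes \<alpha>: "\<alpha> > -1" and \<beta>: "\<beta> > 0" and \<eta>: "\<eta> > 0" and x: "x \<ge> 0"
    and cont: "continuous_on {0..} \<Phi>"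
    and growth: "\<And>z. z \<ge> 0 \<Longrightarrow> \<bar>\<Phi> z\<bar> \<le> M * (1 + z ^ 2)"
    and hyp: "\<And>t. t \<ge> 0 \<Longrightarrow> \<bar>\<Phi> t - \<Phi> x\<bar> \<le> E + D * (t - x) ^ 2"
  shows "\<bar>R_op \<alpha> \<beta> \<eta> \<Phi> x - \<Phi> x\<bar> \<le>
     E + D * (((\<alpha> + 1 + \<eta> * x)^2 + 3 * \<eta> * x + 2 * (\<alpha> + 1) + (\<alpha> + 1 + \<eta> * x) / \<beta>) / \<eta>^2
              - 2 * x * (\<alpha> + 1 + \<eta> * x) / \<eta> + x^2)"
proof -
  define a where "a = \<alpha> + 1"
  define s where "s = \<eta> * x / 2"
  have a: "a > 0" using \<alpha> by (simp add: a_def)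
  have s: "s \<ge> 0" using \<eta> x by (simp add: s_def)
  define q where "q k = p_basis \<alpha> \<eta> k x" for k
  have qeq: "q k = (\<Sum>i\<le>k. cc a s i (k - i))" for k
    unfolding q_def a_def s_def by (rule p_decomp[OF \<alpha>])
  have qnn: "0 \<le> q k" for k unfolding qeq using cc_nonneg[OF a s] by (simp add: sum_nonneg)
  have S0: "q sums 1" using Q0[OF a s] by (simp add: qeq[abs_def])
  have S1: "(\<lambda>k. q k * real k) sums (a + 2 * s)" using Q1[OF a s] by (simp add: qeq[abs_def])
  have S2: "(\<lambda>k. q k * real k ^ 2) sums ((a + 2 * s)^2 + 6 * s + 2 * a)" using Q2[OF a s] by (simp add: qeq[abs_def])
  define J where "J k = (if k = 0 then \<Phi> 0 else (LBINT z:{0<..}. I_kernel \<beta> k \<eta> z * \<Phi> z))" for k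
  define m2 where "m2 k = (real k ^ 2 + real k / \<beta>) / \<eta> ^ 2 - 2 * x * (real k / \<eta>) + x ^ 2" for k
  have Jb: "\<bar>J k - \<Phi> x\<bar> \<le> E + D * m2 k" for k
  proof (cases "k = 0")
    case True then show ?thesis using hyp[of 0] by (simp add: J_def m2_def)
  next
    case False
    then show ?thesis unfolding J_def m2_def using J_bound[OF \<eta> \<beta> _ cont growth hyp, of k] by simp
  qed
  define V where "V = ((a + 2 * s)^2 + 6 * s + 2 * a + (a + 2 * s) / \<beta>) / \<eta>^2 - 2 * x * (a + 2 * s) / \<eta> + x^2"
  have SB: "(\<lambda>k. q k * (E + D * m2 k)) sums (E + D * V)"
  proof -
    have "(\<lambda>k. (E + D * x^2) * q k + (D / \<eta>^2) * (q k * real k ^ 2) + (D / (\<beta> * \<eta>^2) - 2 * D * x / \<eta>) * (q k * real k))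
        sums ((E + D * x^2) * 1 + (D / \<eta>^2) * ((a + 2 * s)^2 + 6 * s + 2 * a) + (D / (\<beta> * \<eta>^2) - 2 * D * x / \<eta>) * (a + 2 * s))"
      by (intro sums_add sums_mult S0 S1 S2)
    then show ?thesis
      by (rule sums_eqI) (use \<eta> \<beta> in \<open>simp_all add: m2_def V_def field_simps power2_eq_square\<close>)
  qed
  have sumB: "summable (\<lambda>k. q k * (E + D * m2 k))" using SB by (rule sums_summable)
  have dnorm: "\<bar>q k * (J k - \<Phi> x)\<bar> \<le> q k * (E + D * m2 k)" for k
    using Jb[of k] qnn[of k] by (simp add: abs_mult mult_left_mono)
  have sumd: "summable (\<lambda>k. q k * (J k - \<Phi> x))"
    by (rule summable_comparison_test[OF _ sumB]) (use dnorm in auto)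
  have sumQJ: "summable (\<lambda>k. q k * J k)"
  proof -
    have "summable (\<lambda>k. q k * (J k - \<Phi> x) + \<Phi> x * q k)"
      using sumd S0 by (intro summable_add summable_mult sums_summable[OF S0])
    then show ?thesis by (simp add: algebra_simps)
  qed
  have "R_op \<alpha> \<beta> \<eta> \<Phi> x = q 0 * J 0 + (\<Sum>k. q (Suc k) * J (Suc k))"
    unfolding R_op_def q_def J_def by simp
  also have "\<dots> = (\<Sum>k. q k * J k)"
    using suminf_split_head[OF sumQJ] by simp
  finally have R: "R_op \<alpha> \<beta> \<eta> \<Phi> x = (\<Sum>k. q k * J k)" .
  have "(\<Sum>k. q k * (J k - \<Phi> x)) = (\<Sum>k. q k * J k - \<Phi> x * q k)"
    by (simp add: algebra_simps)
  also have "\<dots> = (\<Sum>k. q k * J k) - (\<Sum>k. \<Phi> x * q k)"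
    by (rule suminf_diff[OF sumQJ summable_mult[OF sums_summable[OF S0]], symmetric])
  also have "(\<Sum>k. \<Phi> x * q k) = \<Phi> x * (\<Sum>k. q k)"
    using sums_summable[OF S0] by (simp add: suminf_mult)
  also have "(\<Sum>k. q k) = 1" using S0 by (simp add: sums_iff)
  finally have diff: "R_op \<alpha> \<beta> \<eta> \<Phi> x - \<Phi> x = (\<Sum>k. q k * (J k - \<Phi> x))" using R by simp
  have "\<bar>\<Sum>k. q k * (J k - \<Phi> x)\<bar> \<le> (\<Sum>k. q k * (E + D * m2 k))"
    by (rule abs_suminf_le[OF dnorm sumd sumB])
  also have "\<dots> = E + D * V" using SB by (simp add: sums_iff)
  finally have "\<bar>R_op \<alpha> \<beta> \<eta> \<Phi> x - \<Phi> x\<bar> \<le> E + D * V" using diff by simp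
  moreover have "V = ((\<alpha> + 1 + \<eta> * x)^2 + 3 * \<eta> * x + 2 * (\<alpha> + 1) + (\<alpha> + 1 + \<eta> * x) / \<beta>) / \<eta>^2
              - 2 * x * (\<alpha> + 1 + \<eta> * x) / \<eta> + x^2"
    unfolding V_def a_def s_def by simp
  ultimately show ?thesis by simp
qed


lemma V_simp:
  fixes a x \<eta> \<beta> :: real
  assumes "\<eta> > 0" "\<beta> > 0"
  shows "((a + \<eta> * x)^2 + 3 * \<eta> * x + 2 * a + (a + \<eta> * x) / \<beta>) / \<eta>^2 - 2 * x * (a + \<eta> * x) / \<eta> + x^2
     = (a^2 + 2 * a + a / \<beta>) / \<eta>^2 + (3 + 1 / \<beta>) * x / \<eta>"
  using assms by (simp add: field_simps power2_eq_square)

lemma global_hyp: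
  fixes \<Phi> :: "real \<Rightarrow> real"
  assumes growth: "\<And>z. z \<ge> 0 \<Longrightarrow> \<bar>\<Phi> z\<bar> \<le> M * (1 + z ^ 2)" and M: "M \<ge> 0"
    and x: "x \<ge> 0" and t: "t \<ge> 0"
  shows "\<bar>\<Phi> t - \<Phi> x\<bar> \<le> 3 * M * (1 + x^2) + 2 * M * (t - x) ^ 2"
proof -
  have "\<bar>\<Phi> t - \<Phi> x\<bar> \<le> \<bar>\<Phi> t\<bar> + \<bar>\<Phi> x\<bar>" by simp
  also have "\<dots> \<le> M * (1 + t ^ 2) + M * (1 + x ^ 2)" using growth[OF t] growth[OF x] by simp
  also have "\<dots> \<le> 3 * M * (1 + x^2) + 2 * M * (t - x) ^ 2"
  proof -
    have "t ^ 2 \<le> 2 * x^2 + 2 * (t - x)^2"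
      using zero_le_power2[of "t - 2 * x"] by (simp add: power2_eq_square algebra_simps)
    then have "M * t ^ 2 \<le> M * (2 * x^2 + 2 * (t - x)^2)" using M by (rule mult_left_mono)
    moreover have "M * x^2 \<ge> 0" using M by simp
    ultimately show ?thesis using M by (simp add: algebra_simps)
  qed
  finally show ?thesis .
qed

lemma x_le_zeta: "x \<ge> 0 \<Longrightarrow> x \<le> 1 + (x::real)^2"
proof -
  assume x: "x \<ge> 0"
  have "0 \<le> (x - 1)^2" by simp
  then have "2 * x \<le> 1 + x^2" by (simp add: power2_eq_square algebra_simps)
  with x show ?thesis by linarith
qed

lemma core:
  fixes \<Phi> :: "real \<Rightarrow> real"
  assumes \<alpha>: "\<alpha> > -1" and \<beta>: "\<beta> > 0" and l: "l > 1"
    and cont: "continuous_on {0..} \<Phi>"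
    and growth: "\<And>z. z \<ge> 0 \<Longrightarrow> \<bar>\<Phi> z\<bar> \<le> M * (1 + z ^ 2)" and M: "M \<ge> 0"
    and eps: "\<epsilon> > 0"
  shows "\<exists>N. \<forall>\<eta>\<ge>N. \<forall>x\<ge>0. \<bar>R_op \<alpha> \<beta> \<eta> \<Phi> x - \<Phi> x\<bar> / zeta x powr l \<le> \<epsilon>"
proof -
  define a where "a = \<alpha> + 1"
  define C0 where "C0 = a^2 + 2 * a + a / \<beta>"
  define C1 where "C1 = 3 + 1 / \<beta>"
  have a: "a > 0" using \<alpha> by (simp add: a_def)
  have C0: "C0 \<ge> 0" using a \<beta> by (simp add: C0_def)
  have C1: "C1 \<ge> 0" using \<beta> by (simp add: C1_def)
  define K where "K = 3 * M + 2 * M * (C0 + C1)"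
  have K: "K \<ge> 0" using M C0 C1 by (simp add: K_def)
  have RB: "\<bar>R_op \<alpha> \<beta> \<eta> \<Phi> x - \<Phi> x\<bar> \<le> E + D * (C0 / \<eta>^2 + C1 * x / \<eta>)"
    if "\<eta> > 0" "x \<ge> 0" "\<And>t. t \<ge> 0 \<Longrightarrow> \<bar>\<Phi> t - \<Phi> x\<bar> \<le> E + D * (t - x) ^ 2" for \<eta> x E D
    using R_bound[OF \<alpha> \<beta> that(1,2) cont growth that(3)] V_simp[OF that(1) \<beta>, of "\<alpha> + 1" x]
    by (simp add: C0_def C1_def a_def)
  have "((\<lambda>y. y powr (1 - l)) \<longlongrightarrow> 0) at_top"
    using l by (intro tendsto_neg_powr filterlim_ident) auto
  then have "eventually (\<lambda>y. y powr (1 - l) < \<epsilon> / (K + 1)) at_top"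
    using eps K by (intro order_tendstoD) auto
  then obtain Y where Y: "\<And>y. y \<ge> Y \<Longrightarrow> y powr (1 - l) < \<epsilon> / (K + 1)"
    by (auto simp: eventually_at_top_linorder)
  define A where "A = max Y 0"
  have A: "A \<ge> 0" by (simp add: A_def)
  have large: "\<bar>R_op \<alpha> \<beta> \<eta> \<Phi> x - \<Phi> x\<bar> / zeta x powr l \<le> \<epsilon>"
    if \<eta>: "\<eta> \<ge> 1" and x: "x \<ge> 0" and xY: "zeta x \<ge> Y" for \<eta> x
  proof -
    have z1: "zeta x \<ge> 1" by (simp add: zeta_def)
    have "\<bar>R_op \<alpha> \<beta> \<eta> \<Phi> x - \<Phi> x\<bar> \<le> 3 * M * (1 + x^2) + (2 * M) * (C0 / \<eta>^2 + C1 * x / \<eta>)"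
      using \<eta> x by (intro RB global_hyp[OF growth M]) auto
    also have "\<dots> \<le> K * zeta x"
    proof -
      have e2: "1 \<le> \<eta>^2" using \<eta> by (simp add: one_le_power)
      have "C0 * 1 \<le> C0 * \<eta>^2" using e2 C0 by (rule mult_left_mono)
      then have "C0 / \<eta>^2 \<le> C0" using e2 C0 by (simp add: divide_le_eq)
      moreover have "C1 * x / \<eta> \<le> C1 * x"
      proof -
        have cx: "0 \<le> C1 * x" using C1 x by simp
        have "C1 * x * 1 \<le> C1 * x * \<eta>" using \<eta> cx by (rule mult_left_mono)
        then show ?thesis using \<eta> cx by (simp add: divide_le_eq)
      qed
      moreover have "x \<le> 1 + x^2" by (rule x_le_zeta[OF x])
      moreover have "C0 * 1 \<le> C0 * (1 + x^2)" using C0 by (intro mult_left_mono) auto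
      moreover have "C1 * x \<le> C1 * (1 + x^2)" using C1 \<open>x \<le> 1 + x^2\<close> by (intro mult_left_mono) auto
      ultimately have "C0 / \<eta>^2 + C1 * x / \<eta> \<le> (C0 + C1) * (1 + x^2)"
        by (simp add: algebra_simps)
      then have "(2 * M) * (C0 / \<eta>^2 + C1 * x / \<eta>) \<le> (2 * M) * ((C0 + C1) * (1 + x^2))"
        using M by (intro mult_left_mono) auto
      then show ?thesis by (simp add: K_def zeta_def algebra_simps)
    qed
    finally have num: "\<bar>R_op \<alpha> \<beta> \<eta> \<Phi> x - \<Phi> x\<bar> \<le> K * zeta x" .
    have pz: "zeta x powr l > 0" using z1 by simp
    have "\<bar>R_op \<alpha> \<beta> \<eta> \<Phi> x - \<Phi> x\<bar> / zeta x powr l \<le> K * zeta x / zeta x powr l"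
      using num pz by (simp add: divide_right_mono)
    also have "K * zeta x / zeta x powr l = K * zeta x powr (1 - l)"
      using z1 by (simp add: powr_diff)
    also have "\<dots> \<le> K * (\<epsilon> / (K + 1))"
      using Y[OF xY] K by (intro mult_left_mono) auto
    also have "\<dots> \<le> \<epsilon>" using K eps by (simp add: field_simps)
    finally show ?thesis .
  qed
  have "uniformly_continuous_on {0..A+1} \<Phi>"
    by (rule compact_uniformly_continuous) (use cont in \<open>auto intro: continuous_on_subset\<close>)
  then obtain \<delta> where \<delta>: "\<delta> > 0" and \<delta>P: "\<And>t y. t \<in> {0..A+1} \<Longrightarrow> y \<in> {0..A+1} \<Longrightarrow> dist t y < \<delta> \<Longrightarrow> dist (\<Phi> t) (\<Phi> y) < \<epsilon> / 2"
    unfolding uniformly_continuous_on_def using eps by (metis half_gt_zero)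
  define d where "d = min \<delta> 1"
  have d: "d > 0" "d \<le> 1" "d \<le> \<delta>" using \<delta> by (auto simp: d_def)
  define D where "D = 3 * M * (1 + A^2) / d^2 + 2 * M"
  have D: "D \<ge> 0" using M d by (simp add: D_def)
  have smallhyp: "\<bar>\<Phi> t - \<Phi> x\<bar> \<le> \<epsilon> / 2 + D * (t - x) ^ 2" if x: "x \<ge> 0" "x \<le> A" and t: "t \<ge> 0" for x t
  proof (cases "\<bar>t - x\<bar> < d")
    case True
    then have "t \<in> {0..A+1}" "x \<in> {0..A+1}" using x t d by auto
    moreover have "dist t x < \<delta>" using True d by (simp add: dist_real_def)
    ultimately have "\<bar>\<Phi> t - \<Phi> x\<bar> < \<epsilon> / 2" using \<delta>P by (simp add: dist_real_def)
    moreover have "D * (t - x) ^ 2 \<ge> 0" using D by simp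
    ultimately show ?thesis by simp
  next
    case False
    then have "d \<le> \<bar>t - x\<bar>" by simp
    then have "d ^ 2 \<le> \<bar>t - x\<bar> ^ 2" using d by (intro power_mono) auto
    then have tx: "(t - x) ^ 2 \<ge> d ^ 2" by simp
    have "\<bar>\<Phi> t - \<Phi> x\<bar> \<le> 3 * M * (1 + x^2) + 2 * M * (t - x) ^ 2" by (rule global_hyp[OF growth M x(1) t])
    also have "3 * M * (1 + x^2) \<le> 3 * M * (1 + A^2)"
      using M x by (intro mult_left_mono) (auto intro: power_mono)
    also have "3 * M * (1 + A^2) \<le> 3 * M * (1 + A^2) / d^2 * (t - x) ^ 2"
    proof -
      have "1 \<le> (t - x) ^ 2 / d ^ 2" using tx d by simp
      then have "3 * M * (1 + A^2) * 1 \<le> 3 * M * (1 + A^2) * ((t - x) ^ 2 / d ^ 2)"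
        using M by (intro mult_left_mono) auto
      then show ?thesis by simp
    qed
    finally have "\<bar>\<Phi> t - \<Phi> x\<bar> \<le> D * (t - x) ^ 2" by (simp add: D_def algebra_simps)
    then show ?thesis using eps by simp
  qed
  define N where "N = max 1 (2 * D * (C0 + C1 * A) / \<epsilon> + 1)"
  have small: "\<bar>R_op \<alpha> \<beta> \<eta> \<Phi> x - \<Phi> x\<bar> / zeta x powr l \<le> \<epsilon>"
    if \<eta>: "\<eta> \<ge> N" and x: "x \<ge> 0" "x \<le> A" for \<eta> x
  proof -
    have \<eta>1: "\<eta> \<ge> 1" using \<eta> by (simp add: N_def)
    have \<eta>2: "\<eta> > 2 * D * (C0 + C1 * A) / \<epsilon>" using \<eta> by (simp add: N_def)
    have "\<bar>R_op \<alpha> \<beta> \<eta> \<Phi> x - \<Phi> x\<bar> \<le> \<epsilon> / 2 + D * (C0 / \<eta>^2 + C1 * x / \<eta>)"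
      using \<eta>1 x by (intro RB smallhyp) auto
    also have "C0 / \<eta>^2 + C1 * x / \<eta> \<le> (C0 + C1 * A) / \<eta>"
    proof -
      have "C0 / \<eta>^2 \<le> C0 / \<eta>" using \<eta>1 C0 by (simp add: frac_le power2_eq_square)
      moreover have "C1 * x / \<eta> \<le> C1 * A / \<eta>" using \<eta>1 C1 x by (simp add: divide_right_mono mult_left_mono)
      ultimately show ?thesis by (simp add: add_divide_distrib)
    qed
    then have "D * (C0 / \<eta>^2 + C1 * x / \<eta>) \<le> D * ((C0 + C1 * A) / \<eta>)" using D by (rule mult_left_mono)
    then have "\<epsilon> / 2 + D * (C0 / \<eta>^2 + C1 * x / \<eta>) \<le> \<epsilon> / 2 + D * ((C0 + C1 * A) / \<eta>)" by simp
    also have "D * ((C0 + C1 * A) / \<eta>) \<le> \<epsilon> / 2"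
      using \<eta>2 \<eta>1 eps by (simp add: field_simps)
    finally have num: "\<bar>R_op \<alpha> \<beta> \<eta> \<Phi> x - \<Phi> x\<bar> \<le> \<epsilon>" by simp
    have z1: "zeta x powr l \<ge> 1" using l by (simp add: zeta_def ge_one_powr_ge_zero)
    have "\<bar>R_op \<alpha> \<beta> \<eta> \<Phi> x - \<Phi> x\<bar> / zeta x powr l \<le> \<bar>R_op \<alpha> \<beta> \<eta> \<Phi> x - \<Phi> x\<bar>"
    proof -
      have "zeta x > 0" unfolding zeta_def by (simp add: add_pos_nonneg)
      then show ?thesis using divide_left_mono[OF z1, of "\<bar>R_op \<alpha> \<beta> \<eta> \<Phi> x - \<Phi> x\<bar>"] z1 by simp
    qed
    with num show ?thesis by simp
  qed
  show ?thesis
  proof (intro exI allI impI)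
    fix \<eta> x :: real assume \<eta>: "\<eta> \<ge> N" and x: "x \<ge> 0"
    show "\<bar>R_op \<alpha> \<beta> \<eta> \<Phi> x - \<Phi> x\<bar> / zeta x powr l \<le> \<epsilon>"
    proof (cases "zeta x \<ge> Y")
      case True then show ?thesis using large[of \<eta> x] \<eta> x by (simp add: N_def)
    next
      case False
      have "x \<le> zeta x" unfolding zeta_def by (rule x_le_zeta[OF x])
      then have "x \<le> A" using False by (simp add: A_def)
      then show ?thesis using small \<eta> x by simp
    qed
  qed
qed


theorem mainTheorem10:
  fixes \<alpha> \<beta> l :: real and \<Phi> :: "real \<Rightarrow> real"
  assumes "\<alpha> > -1" and "\<beta> > 0" and "\<Phi> \<in> C_zeta" and "l > 1"
  shows "((\<lambda>\<eta>. SUP x\<in>{0::real..}. ereal (\<bar>R_op \<alpha> \<beta> \<eta> \<Phi> x - \<Phi> x\<bar> / (zeta x) powr l))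
           \<longlongrightarrow> 0) at_top"
proof -
  from assms(3) obtain M where M: "\<And>x. x \<ge> 0 \<Longrightarrow> \<bar>\<Phi> x\<bar> \<le> M * zeta x"
    and cont: "continuous_on {0..} \<Phi>"
    unfolding C_zeta_def B_zeta_def by auto
  have M0: "M \<ge> 0" using M[of 0] by (simp add: zeta_def)
  have growth: "\<And>z. z \<ge> 0 \<Longrightarrow> \<bar>\<Phi> z\<bar> \<le> M * (1 + z ^ 2)" using M by (simp add: zeta_def)
  show ?thesis
  proof (rule order_tendstoI)
    fix a :: ereal assume a: "a < 0"
    show "eventually (\<lambda>\<eta>. a < (SUP x\<in>{0::real..}. ereal (\<bar>R_op \<alpha> \<beta> \<eta> \<Phi> x - \<Phi> x\<bar> / (zeta x) powr l))) at_top"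
    proof (rule always_eventually, rule allI)
      fix \<eta> :: real
      have "ereal (\<bar>R_op \<alpha> \<beta> \<eta> \<Phi> 0 - \<Phi> 0\<bar> / (zeta 0) powr l) \<le> (SUP x\<in>{0::real..}. ereal (\<bar>R_op \<alpha> \<beta> \<eta> \<Phi> x - \<Phi> x\<bar> / (zeta x) powr l))"
        by (rule SUP_upper) simp
      moreover have "0 \<le> \<bar>R_op \<alpha> \<beta> \<eta> \<Phi> 0 - \<Phi> 0\<bar> / (zeta 0) powr l" by simp
      ultimately show "a < (SUP x\<in>{0::real..}. ereal (\<bar>R_op \<alpha> \<beta> \<eta> \<Phi> x - \<Phi> x\<bar> / (zeta x) powr l))"
        using a by (meson ereal_less_eq(5) less_le_trans not_le)
    qed
  next
    fix a :: ereal assume a: "0 < a"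
    obtain e where e0: "0 < ereal e" and ea: "ereal e < a" using ereal_dense2[OF a] by blast
    have e: "e > 0" using e0 by simp
    obtain N where N: "\<And>\<eta> x. \<eta> \<ge> N \<Longrightarrow> x \<ge> 0 \<Longrightarrow> \<bar>R_op \<alpha> \<beta> \<eta> \<Phi> x - \<Phi> x\<bar> / zeta x powr l \<le> e / 2"
      using core[OF assms(1,2,4) cont growth M0, of "e / 2"] e by auto
    show "eventually (\<lambda>\<eta>. (SUP x\<in>{0::real..}. ereal (\<bar>R_op \<alpha> \<beta> \<eta> \<Phi> x - \<Phi> x\<bar> / (zeta x) powr l)) < a) at_top"
      unfolding eventually_at_top_linorder
    proof (intro exI allI impI)
      fix \<eta> assume \<eta>: "\<eta> \<ge> N"
      have "(SUP x\<in>{0::real..}. ereal (\<bar>R_op \<alpha> \<beta> \<eta> \<Phi> x - \<Phi> x\<bar> / (zeta x) powr l)) \<le> ereal (e / 2)"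
        by (rule SUP_least) (use N[OF \<eta>] in auto)
      also have "ereal (e / 2) < ereal e" using e by simp
      also note ea
      finally show "(SUP x\<in>{0::real..}. ereal (\<bar>R_op \<alpha> \<beta> \<eta> \<Phi> x - \<Phi> x\<bar> / (zeta x) powr l)) < a" .
    qed
  qed
qed

end
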